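(* The following randomized mechanism obtains a $4$-approximation to the optimal social welfare for bidders with additive valuations, i.e., for every profile of additive valuations, its expected welfare (when bidders act truthfully) is at least $\mathrm{OPT}/4$. Index the bidders in an arbitrary fixed order. Independently place each bidder in a set $S$ with probability $1/2$ and in a set $U$ otherwise. Bidders in $S$ receive nothing and report their value for each item. For each item $j$, set price $p_j=\max_{i\in S}v_{ij}$ and let $n(j)$ be the smallest index among bidders in $\arg\max_{i\in S}v_{ij}$. Then, for each $i\in U$ in an arbitrary order, bidder $i$ purchases all previously unsold items $j$ for which either $v_{ij}>p_j$, or $v_{ij}=p_j$ and $i$ has a lower index than $n(j)$.
   Context: Combinatorial auction with item set $M$ and bidder set $N$; bidder $i$ has an additive valuation: values $v_{ij}\ge0$ with $v_i(A)=\sum_{j\in A}v_{ij}$. $\mathrm{OPT}$ is the maximum over allocations of disjoint bundles $(T_1,\dots,T_n)$ of $\sum_i v_i(T_i)$. Truthful behavior of a bidder in $U$ means purchasing exactly the items described; bidders in $S$ report their true values. The expectation is over the random placement of bidders. *)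

theory Defs
  imports Complex_Main
begin

(* Bidders are natural numbers (their index is the number itself); N is the finite
   bidder set, M the finite item set, v i j the value of bidder i for item j. *)

definition welfare :: "nat set \<Rightarrow> (nat \<Rightarrow> 'm \<Rightarrow> real) \<Rightarrow> (nat \<Rightarrow> 'm set) \<Rightarrow> real" where
  "welfare N v T = (\<Sum>i\<in>N. \<Sum>j\<in>T i. v i j)"

definition allocation :: "nat set \<Rightarrow> 'm set \<Rightarrow> (nat \<Rightarrow> 'm set) \<Rightarrow> bool" where
  "allocation N M T \<longleftrightarrow> (\<forall>i\<in>N. T i \<subseteq> M) \<and>
      (\<forall>i\<in>N. \<forall>k\<in>N. i \<noteq> k \<longrightarrow> T i \<inter> T k = {})"

definition OPT :: "nat set \<Rightarrow> 'm set \<Rightarrow> (nat \<Rightarrow> 'm \<Rightarrow> real) \<Rightarrow> real" where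
  "OPT N M v = (SUP T\<in>{T. allocation N M T}. welfare N v T)"

definition price :: "nat set \<Rightarrow> (nat \<Rightarrow> 'm \<Rightarrow> real) \<Rightarrow> 'm \<Rightarrow> real" where
  "price S v j = (if S = {} then 0 else Max ((\<lambda>i. v i j) ` S))"

definition tiebidder :: "nat set \<Rightarrow> (nat \<Rightarrow> 'm \<Rightarrow> real) \<Rightarrow> 'm \<Rightarrow> nat" where
  "tiebidder S v j = (LEAST i. i \<in> S \<and> v i j = price S v j)"

definition wants :: "nat set \<Rightarrow> nat set \<Rightarrow> (nat \<Rightarrow> 'm \<Rightarrow> real) \<Rightarrow> nat \<Rightarrow> 'm \<Rightarrow> bool" where
  "wants N S v i j \<longleftrightarrow> i \<in> N - S \<and>
     (v i j > price S v j \<or> (S \<noteq> {} \<and> v i j = price S v j \<and> i < tiebidder S v j))"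

(* Bidders of U are processed in the order given by the injective rank function r
   (smaller rank = earlier); item j goes to the first bidder in that order who wants it. *)
definition mech_welfare ::
  "nat set \<Rightarrow> 'm set \<Rightarrow> (nat \<Rightarrow> 'm \<Rightarrow> real) \<Rightarrow> (nat \<Rightarrow> nat) \<Rightarrow> nat set \<Rightarrow> real" where
  "mech_welfare N M v r S =
     (\<Sum>j\<in>M. if (\<exists>i. wants N S v i j)
              then v (ARG_MIN r i. wants N S v i j) j else 0)"

(* S is a uniformly random subset of N (each bidder independently in S w.p. 1/2);
   the processing order of U may depend on S. *)
definition expected_mech_welfare ::
  "nat set \<Rightarrow> 'm set \<Rightarrow> (nat \<Rightarrow> 'm \<Rightarrow> real) \<Rightarrow> (nat set \<Rightarrow> nat \<Rightarrow> nat) \<Rightarrow> real" where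
  "expected_mech_welfare N M v \<sigma> =
     (\<Sum>S\<in>Pow N. (1/2) ^ card S * (1/2) ^ card (N - S) * mech_welfare N M v (\<sigma> S) S)"

end

theory Submission
  imports Defs
begin

lemma best_exists:
  fixes f :: "nat \<Rightarrow> real"
  assumes "finite A" "A \<noteq> {}"
  shows "\<exists>a\<in>A. (\<forall>i\<in>A. f i \<le> f a) \<and> (\<forall>i\<in>A. f i = f a \<longrightarrow> a \<le> i)"
proof -
  let ?m = "Max (f ` A)"
  have "\<exists>i. i \<in> A \<and> f i = ?m" using assms by (metis (mono_tags, lifting) Max_in finite_imageI image_iff image_is_empty)
  then obtain i0 where i0: "i0 \<in> A \<and> f i0 = ?m" by blast
  define a where "a = (LEAST i. i \<in> A \<and> f i = ?m)"
  have a: "a \<in> A \<and> f a = ?m" unfolding a_def by (rule LeastI[of _ i0], rule i0)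
  have "\<forall>i\<in>A. f i \<le> f a" using a assms by simp
  moreover have "\<forall>i\<in>A. f i = f a \<longrightarrow> a \<le> i" using a unfolding a_def
    by (metis (mono_tags, lifting) Least_le)
  ultimately show ?thesis using a by blast
qed

definition fval :: "nat set \<Rightarrow> (nat \<Rightarrow> 'm \<Rightarrow> real) \<Rightarrow> (nat \<Rightarrow> nat) \<Rightarrow> nat set \<Rightarrow> 'm \<Rightarrow> real" where
  "fval N v r S j = (if (\<exists>i. wants N S v i j) then v (ARG_MIN r i. wants N S v i j) j else 0)"

lemma fval_nonneg:
  assumes "\<And>i. i \<in> N \<Longrightarrow> v i j \<ge> 0"
  shows "fval N v r S j \<ge> 0"
proof (cases "\<exists>i. wants N S v i j")
  case True
  then obtain k where "wants N S v k j" by blast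
  then have "wants N S v (ARG_MIN r i. wants N S v i j) j" by (rule arg_min_natI)
  then have "(ARG_MIN r i. wants N S v i j) \<in> N" unfolding wants_def by blast
  then show ?thesis using True assms unfolding fval_def by simp
qed (simp add: fval_def)

lemma fval_unique:
  assumes "\<And>i. wants N S v i j \<longleftrightarrow> i = a"
  shows "fval N v r S j = v a j"
proof -
  have "wants N S v (ARG_MIN r i. wants N S v i j) j" by (rule arg_min_natI[of _ a], simp add: assms)
  then show ?thesis unfolding fval_def using assms by auto
qed

lemma fval_good:
  assumes fin: "finite N" and SN: "S \<subseteq> N" and i1N: "i1 \<in> N" and i2N: "i2 \<in> N" and ne: "i1 \<noteq> i2"
    and i1S: "i1 \<notin> S" and i2S: "i2 \<in> S"
    and max1: "\<forall>i\<in>N. v i j \<le> v i1 j" and tie1: "\<forall>i\<in>N. v i j = v i1 j \<longrightarrow> i1 \<le> i"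
    and max2: "\<forall>i\<in>N-{i1}. v i j \<le> v i2 j" and tie2: "\<forall>i\<in>N-{i1}. v i j = v i2 j \<longrightarrow> i2 \<le> i"
  shows "fval N v r S j = v i1 j"
proof -
  have finS: "finite S" using fin SN finite_subset by blast
  have Sne: "S \<noteq> {}" using i2S by blast
  have SN1: "S \<subseteq> N - {i1}" using SN i1S by blast
  have pr: "price S v j = v i2 j" unfolding price_def using Sne
    by (auto intro!: Max_eqI simp: finS i2S) (use SN1 max2 in blast)
  have tb: "tiebidder S v j = i2" unfolding tiebidder_def pr
    by (rule Least_equality) (use i2S SN1 tie2 in auto)
  have "wants N S v i j \<longleftrightarrow> i = i1" for i
  proof
    assume w: "wants N S v i j"
    show "i = i1"
    proof (rule ccontr)
      assume "i \<noteq> i1"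
      then have iN: "i \<in> N - {i1}" using w unfolding wants_def by blast
      then show False using w max2 tie2 unfolding wants_def pr tb by force
    qed
  next
    assume "i = i1"
    moreover have "v i1 j \<ge> v i2 j" using max1 i2N by blast
    moreover have "v i1 j = v i2 j \<Longrightarrow> i1 < i2" using tie1 i2N ne by force
    ultimately show "wants N S v i j" unfolding wants_def pr tb using i1N i1S Sne by force
  qed
  then show ?thesis by (rule fval_unique)
qed

lemma fval_single:
  assumes "v i1 j \<ge> 0"
  shows "fval {i1} v r {} j = v i1 j"
proof (cases "v i1 j > 0")
  case True
  have "wants {i1} {} v i j \<longleftrightarrow> i = i1" for i using True unfolding wants_def price_def by auto
  then show ?thesis by (rule fval_unique)
next
  case False
  then have "\<not> wants {i1} {} v i j" for i unfolding wants_def price_def by auto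
  then show ?thesis using False assms unfolding fval_def by simp
qed

lemma item_bound:
  fixes r :: "nat set \<Rightarrow> nat \<Rightarrow> nat"
  assumes fin: "finite N" and Nne: "N \<noteq> {}" and nn: "\<And>i. i \<in> N \<Longrightarrow> v i j \<ge> 0"
  shows "(\<Sum>S\<in>Pow N. (1/2) ^ card N * fval N v (r S) S j) \<ge> Max ((\<lambda>i. v i j) ` N) / 4"
proof -
  obtain i1 where i1N: "i1 \<in> N" and max1: "\<forall>i\<in>N. v i j \<le> v i1 j" and tie1: "\<forall>i\<in>N. v i j = v i1 j \<longrightarrow> i1 \<le> i"
    using best_exists[OF fin Nne, of "\<lambda>i. v i j"] by blast
  have M1: "Max ((\<lambda>i. v i j) ` N) = v i1 j"
    by (rule Max_eqI) (use fin max1 i1N in auto)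
  have v1: "v i1 j \<ge> 0" using nn i1N by blast
  have fnn: "\<And>S. fval N v (r S) S j \<ge> 0" by (rule fval_nonneg[of N v j, OF nn])
  show ?thesis
  proof (cases "N - {i1} = {}")
    case True
    then have Ne: "N = {i1}" using i1N by blast
    have "Pow N = {{}, {i1}}" unfolding Ne by blast
    then have "(\<Sum>S\<in>Pow N. (1/2) ^ card N * fval N v (r S) S j)
        = (1/2) * fval N v (r {}) {} j + (1/2) * fval N v (r {i1}) {i1} j" using Ne by simp
    also have "fval N v (r {}) {} j = v i1 j" unfolding Ne by (rule fval_single[of v i1 j, OF v1])
    finally show ?thesis using M1 fnn[of "{i1}"] v1 by linarith
  next
    case False
    have fin1: "finite (N - {i1})" using fin by blast
    obtain i2 where i2N1: "i2 \<in> N - {i1}" and max2: "\<forall>i\<in>N-{i1}. v i j \<le> v i2 j" and tie2: "\<forall>i\<in>N-{i1}. v i j = v i2 j \<longrightarrow> i2 \<le> i"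
      using best_exists[OF fin1 False, of "\<lambda>i. v i j"] by blast
    have i2N: "i2 \<in> N" and ne: "i1 \<noteq> i2" using i2N1 by auto
    define R where "R = N - {i1, i2}"
    define G where "G = insert i2 ` Pow R"
    have finR: "finite R" unfolding R_def using fin by blast
    have cardR: "card N = card R + 2"
    proof -
      have "card R = card N - 2" unfolding R_def using fin i1N i2N ne by (simp add: card_Diff_subset)
      moreover have "card N \<ge> 2"
      proof -
        have "{i1, i2} \<subseteq> N" using i1N i2N by blast
        then have "card {i1, i2} \<le> card N" by (rule card_mono[OF fin])
        then show ?thesis using ne by simp
      qed
      ultimately show ?thesis by simp
    qed
    have i2R: "i2 \<notin> R" unfolding R_def by blast
    have inj: "inj_on (insert i2) (Pow R)"
    proof (rule inj_onI)
      fix x y assume x: "x \<in> Pow R" and y: "y \<in> Pow R" and e: "insert i2 x = insert i2 y"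
      have "x = insert i2 x - {i2}" using x i2R by blast
      also have "\<dots> = insert i2 y - {i2}" using e by simp
      also have "\<dots> = y" using y i2R by blast
      finally show "x = y" .
    qed
    have cardG: "card G = 2 ^ card R" unfolding G_def
      using card_image[OF inj] card_Pow[OF finR] by simp
    have GP: "G \<subseteq> Pow N" unfolding G_def R_def using i2N by blast
    have good: "\<And>S. S \<in> G \<Longrightarrow> fval N v (r S) S j = v i1 j"
    proof -
      fix S assume "S \<in> G"
      then have "S \<subseteq> N" "i1 \<notin> S" "i2 \<in> S" unfolding G_def R_def using i2N ne by auto
      then show "fval N v (r S) S j = v i1 j"
        using fval_good[of N S i1 i2 v j "r S", OF fin _ i1N i2N ne _ _ max1 tie1 max2 tie2] by blast
    qed
    have "(\<Sum>S\<in>G. (1/2) ^ card N * fval N v (r S) S j) \<le> (\<Sum>S\<in>Pow N. (1/2) ^ card N * fval N v (r S) S j)"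
      using fnn by (intro sum_mono2[OF finite_Pow_iff[THEN iffD2, OF fin] GP]) simp
    moreover have "(\<Sum>S\<in>G. (1/2) ^ card N * fval N v (r S) S j) = card G * ((1/2) ^ card N * v i1 j)"
      using good by simp
    moreover have "card G * ((1/2) ^ card N * v i1 j) = v i1 j / 4"
      using cardG cardR by (simp add: power_add field_simps)
    ultimately show ?thesis using M1 by linarith
  qed
qed

lemma welfare_bound:
  assumes fin: "finite N" and finM: "finite M" and nn: "\<And>i j. i \<in> N \<Longrightarrow> j \<in> M \<Longrightarrow> v i j \<ge> 0"
    and al: "allocation N M T"
  shows "welfare N v T \<le> (\<Sum>j\<in>M. (if N = {} then 0 else Max ((\<lambda>i. v i j) ` N)))"
proof (cases "N = {}")
  case True
  then show ?thesis unfolding welfare_def by simp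
next
  case False
  define m where "m j = Max ((\<lambda>i. v i j) ` N)" for j
  have sub: "\<forall>i\<in>N. T i \<subseteq> M" and dis: "\<forall>i\<in>N. \<forall>k\<in>N. i \<noteq> k \<longrightarrow> T i \<inter> T k = {}"
    using al unfolding allocation_def by auto
  have finT: "\<forall>i\<in>N. finite (T i)" using sub finM finite_subset by blast
  have ge: "v i j \<le> m j" if "i \<in> N" for i j unfolding m_def using fin that by (intro Max_ge) auto
  have mnn: "m j \<ge> 0" if "j \<in> M" for j
  proof -
    obtain i where "i \<in> N" using False by blast
    then show ?thesis using ge[of i j] nn[of i j] that by linarith
  qed
  have "welfare N v T = (\<Sum>i\<in>N. \<Sum>j\<in>T i. v i j)" unfolding welfare_def ..
  also have "\<dots> \<le> (\<Sum>i\<in>N. \<Sum>j\<in>T i. m j)"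
    by (intro sum_mono) (use ge in blast)
  also have "\<dots> = (\<Sum>j\<in>(\<Union>i\<in>N. T i). m j)"
    by (rule sum.UNION_disjoint[symmetric]) (use fin finT dis in auto)
  also have "\<dots> \<le> (\<Sum>j\<in>M. m j)"
    by (rule sum_mono2[OF finM]) (use sub mnn in auto)
  finally show ?thesis using False unfolding m_def by simp
qed

lemma OPT_bound:
  assumes fin: "finite N" and finM: "finite M" and nn: "\<And>i j. i \<in> N \<Longrightarrow> j \<in> M \<Longrightarrow> v i j \<ge> 0"
  shows "OPT N M v \<le> (\<Sum>j\<in>M. (if N = {} then 0 else Max ((\<lambda>i. v i j) ` N)))"
proof -
  have "(\<lambda>_. {}) \<in> {T. allocation N M T}" unfolding allocation_def by simp
  then have ne: "{T. allocation N M T} \<noteq> {}" by blast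
  show ?thesis unfolding OPT_def
    by (rule cSUP_least[OF ne]) (use welfare_bound[OF fin finM nn] in simp)
qed

theorem lemma4p3:
  fixes N :: "nat set" and M :: "'m set" and v :: "nat \<Rightarrow> 'm \<Rightarrow> real"
    and \<sigma> :: "nat set \<Rightarrow> nat \<Rightarrow> nat"
  assumes "finite N" and "finite M"
    and "\<And>i j. i \<in> N \<Longrightarrow> j \<in> M \<Longrightarrow> v i j \<ge> 0"
    and "\<And>S. S \<subseteq> N \<Longrightarrow> inj_on (\<sigma> S) (N - S)"
  shows "expected_mech_welfare N M v \<sigma> \<ge> OPT N M v / 4"
proof -
  note fin = assms(1) and finM = assms(2) and nn = assms(3)
  define B where "B j = (if N = {} then 0 else Max ((\<lambda>i. v i j) ` N))" for j
  have E: "expected_mech_welfare N M v \<sigma> = (\<Sum>S\<in>Pow N. (1/2) ^ card N * (\<Sum>j\<in>M. fval N v (\<sigma> S) S j))"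
    unfolding expected_mech_welfare_def
  proof (rule sum.cong[OF refl])
    fix S assume "S \<in> Pow N"
    then have "S \<subseteq> N" by blast
    then have "card S + card (N - S) = card N"
      using fin by (metis card_Diff_subset card_mono finite_subset le_add_diff_inverse)
    then have "(1/2::real) ^ card S * (1/2) ^ card (N - S) = (1/2) ^ card N"
      by (metis power_add)
    then show "(1/2) ^ card S * (1/2) ^ card (N - S) * mech_welfare N M v (\<sigma> S) S
        = (1/2) ^ card N * (\<Sum>j\<in>M. fval N v (\<sigma> S) S j)"
      unfolding mech_welfare_def fval_def by simp
  qed
  also have "\<dots> = (\<Sum>j\<in>M. \<Sum>S\<in>Pow N. (1/2) ^ card N * fval N v (\<sigma> S) S j)"
    by (simp add: sum_distrib_left sum.swap[of _ "Pow N"])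
  finally have E2: "expected_mech_welfare N M v \<sigma> = (\<Sum>j\<in>M. \<Sum>S\<in>Pow N. (1/2) ^ card N * fval N v (\<sigma> S) S j)" .
  have per: "B j / 4 \<le> (\<Sum>S\<in>Pow N. (1/2) ^ card N * fval N v (\<sigma> S) S j)" if j: "j \<in> M" for j
  proof (cases "N = {}")
    case True
    have "0 \<le> fval N v (\<sigma> S) S j" for S using True by (intro fval_nonneg) simp
    then show ?thesis using True unfolding B_def by (simp add: sum_nonneg)
  next
    case False
    have "\<And>i. i \<in> N \<Longrightarrow> v i j \<ge> 0" using nn j by blast
    from item_bound[of N v j \<sigma>, OF fin False this] show ?thesis using False unfolding B_def by simp
  qed
  have "OPT N M v / 4 \<le> (\<Sum>j\<in>M. B j) / 4"
    using OPT_bound[OF fin finM nn] unfolding B_def by simp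
  also have "\<dots> = (\<Sum>j\<in>M. B j / 4)" by (simp add: sum_divide_distrib)
  also have "\<dots> \<le> (\<Sum>j\<in>M. \<Sum>S\<in>Pow N. (1/2) ^ card N * fval N v (\<sigma> S) S j)"
    by (rule sum_mono) (rule per)
  finally show ?thesis using E2 by simp
qed

end
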